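(* Let $P=\{S_1,\ldots,S_n\}$ be a homothetic packing of $n\ge 6$ squares whose radii satisfy the weak generic condition. Suppose that $(n_1,\ldots,n_k)$ is a cycle in the graph $([n],E_x)$ such that, setting $n_0=n_k$ and $n_{k+1}=n_1$, for every $i\in[k]$ neither $x_{n_{i-1}}<x_{n_i}<x_{n_{i+1}}$ nor $x_{n_{i+1}}<x_{n_i}<x_{n_{i-1}}$ holds. Then $k=4$ and the squares $S_{n_1},S_{n_2},S_{n_3},S_{n_4}$ share a corner.
   Context: Let $S=\{(x,y): -1\le x,y\le 1\}$. A homothetic packing of $n$ squares is a set $P=\{S_1,\ldots,S_n\}$ with $S_i=r_iS+p_i$, $r_i>0$ (radii), $p_i=(x_i,y_i)\in\mathbb{R}^2$ (centres), such that distinct squares have disjoint interiors. Its contact graph is $G=([n],E)$ where $\{i,j\}\in E$ iff $i\ne j$ and $S_i\cap S_j\ne\emptyset$; $E_x$ is the set of pairs $\{i,j\}\in E$ with $r_i+r_j=|x_i-x_j|\ge|y_i-y_j|$. The radii satisfy the weak generic condition if the only function $\sigma:[n]\to\{-1,0,1\}$ with at least $4$ zeroes and $\sum_{i=1}^n\sigma_ir_i=0$ is the zero function. Four squares share a corner if they have a common point which is a corner of each of them. *)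

theory Defs
  imports "HOL-Analysis.Analysis"
begin

text \<open>Squares are indexed by [n] = {1..n}. Square i has radius r i and centre (x i, y i).
  S = [-1,1]^2, so S_i = r_i S + p_i.\<close>

definition sq :: "(nat \<Rightarrow> real) \<Rightarrow> (nat \<Rightarrow> real) \<Rightarrow> (nat \<Rightarrow> real) \<Rightarrow> nat \<Rightarrow> (real \<times> real) set" where
  "sq r x y i = {p. \<bar>fst p - x i\<bar> \<le> r i \<and> \<bar>snd p - y i\<bar> \<le> r i}"

definition homothetic_packing :: "nat \<Rightarrow> (nat \<Rightarrow> real) \<Rightarrow> (nat \<Rightarrow> real) \<Rightarrow> (nat \<Rightarrow> real) \<Rightarrow> bool" where
  "homothetic_packing n r x y \<longleftrightarrow>
     (\<forall>i\<in>{1..n}. r i > 0) \<and>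
     (\<forall>i\<in>{1..n}. \<forall>j\<in>{1..n}. i \<noteq> j \<longrightarrow>
        interior (sq r x y i) \<inter> interior (sq r x y j) = {})"

definition contact_edge :: "nat \<Rightarrow> (nat \<Rightarrow> real) \<Rightarrow> (nat \<Rightarrow> real) \<Rightarrow> (nat \<Rightarrow> real) \<Rightarrow> nat \<Rightarrow> nat \<Rightarrow> bool" where
  "contact_edge n r x y i j \<longleftrightarrow> i \<in> {1..n} \<and> j \<in> {1..n} \<and> i \<noteq> j \<and>
     sq r x y i \<inter> sq r x y j \<noteq> {}"

definition x_edge :: "nat \<Rightarrow> (nat \<Rightarrow> real) \<Rightarrow> (nat \<Rightarrow> real) \<Rightarrow> (nat \<Rightarrow> real) \<Rightarrow> nat \<Rightarrow> nat \<Rightarrow> bool" where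
  "x_edge n r x y i j \<longleftrightarrow> contact_edge n r x y i j \<and>
     r i + r j = \<bar>x i - x j\<bar> \<and> \<bar>x i - x j\<bar> \<ge> \<bar>y i - y j\<bar>"

definition weak_generic :: "nat \<Rightarrow> (nat \<Rightarrow> real) \<Rightarrow> bool" where
  "weak_generic n r \<longleftrightarrow>
     (\<forall>\<sigma> :: nat \<Rightarrow> int.
        (\<forall>i\<in>{1..n}. \<sigma> i \<in> {-1, 0, 1}) \<and>
        card {i\<in>{1..n}. \<sigma> i = 0} \<ge> 4 \<and>
        (\<Sum>i=1..n. of_int (\<sigma> i) * r i) = 0
        \<longrightarrow> (\<forall>i\<in>{1..n}. \<sigma> i = 0))"

text \<open>A cycle (n_1,...,n_k), stored 0-indexed as a list c with c!0 = n_1, in the graph with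
  vertex set {1..n} and symmetric edge relation adj: k \<ge> 3 distinct vertices, consecutive ones
  (cyclically) adjacent.\<close>
definition is_cycle :: "nat \<Rightarrow> (nat \<Rightarrow> nat \<Rightarrow> bool) \<Rightarrow> nat list \<Rightarrow> bool" where
  "is_cycle n adj c \<longleftrightarrow> length c \<ge> 3 \<and> distinct c \<and> set c \<subseteq> {1..n} \<and>
     (\<forall>i < length c. adj (c ! i) (c ! ((i + 1) mod length c)))"

definition is_corner :: "(nat \<Rightarrow> real) \<Rightarrow> (nat \<Rightarrow> real) \<Rightarrow> (nat \<Rightarrow> real) \<Rightarrow> nat \<Rightarrow> real \<times> real \<Rightarrow> bool" where
  "is_corner r x y i p \<longleftrightarrow>
     (\<exists>s\<in>{-1, 1::real}. \<exists>t\<in>{-1, 1::real}. p = (x i + s * r i, y i + t * r i))"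

definition share_corner :: "(nat \<Rightarrow> real) \<Rightarrow> (nat \<Rightarrow> real) \<Rightarrow> (nat \<Rightarrow> real) \<Rightarrow> nat set \<Rightarrow> bool" where
  "share_corner r x y A \<longleftrightarrow> (\<exists>p. \<forall>i\<in>A. is_corner r x y i p)"

end

theory Submission
  imports Defs
begin

lemma side_disj:
  assumes hp: "homothetic_packing n r x y" and i: "i \<in> {1..n}" and j: "j\<in>{1..n}" and ij: "i\<noteq>j"
    and t: "t = 1 \<or> t = -1" and eq: "x i + t * r i = x j + t * r j"
  shows "\<bar>y i - y j\<bar> \<ge> r i + r j"
proof (rule ccontr)
  assume "\<not> ?thesis" hence lt: "\<bar>y i - y j\<bar> < r i + r j" by simp
  have ri: "r i > 0" "r j > 0" using hp i j unfolding homothetic_packing_def by auto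
  have dis: "interior (sq r x y i) \<inter> interior (sq r x y j) = {}"
    using hp i j ij unfolding homothetic_packing_def by auto
  define lo where "lo = max (y i - r i) (y j - r j)"
  define hi where "hi = min (y i + r i) (y j + r j)"
  have lohi: "lo < hi" using lt ri unfolding lo_def hi_def by (auto simp: abs_if split: if_splits)
  define e where "e = min (r i) (r j) / 2"
  have e: "0 < e" "e < r i" "e < r j" using ri unfolding e_def by auto
  define p where "p = (x i + t * r i - t * e, (lo + hi)/2)"
  have int: "p \<in> interior (sq r x y l)" if "\<bar>fst p - x l\<bar> < r l" "\<bar>snd p - y l\<bar> < r l" for l
  proof -
    have "open {q::real\<times>real. \<bar>fst q - x l\<bar> < r l \<and> \<bar>snd q - y l\<bar> < r l}"
      by (intro open_Collect_conj open_Collect_less continuous_intros)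
    moreover have "{q::real\<times>real. \<bar>fst q - x l\<bar> < r l \<and> \<bar>snd q - y l\<bar> < r l} \<subseteq> sq r x y l"
      unfolding sq_def by auto
    ultimately show ?thesis using that interior_maximal by blast
  qed
  have "fst p - x i = t * (r i - e)" unfolding p_def by (simp add: algebra_simps)
  hence a1: "\<bar>fst p - x i\<bar> < r i" using t e by auto
  have "fst p - x j = t * (r j - e)" using eq unfolding p_def by (simp add: algebra_simps)
  hence a2: "\<bar>fst p - x j\<bar> < r j" using t e by auto
  have m1: "lo < (lo+hi)/2" "(lo+hi)/2 < hi" using lohi by auto
  have m2: "lo \<ge> y i - r i" "lo \<ge> y j - r j" "hi \<le> y i + r i" "hi \<le> y j + r j"
    unfolding lo_def hi_def by auto
  have a3: "\<bar>snd p - y i\<bar> < r i" "\<bar>snd p - y j\<bar> < r j"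
  proof -
    have "snd p = (lo+hi)/2" unfolding p_def by simp
    thus "\<bar>snd p - y i\<bar> < r i" "\<bar>snd p - y j\<bar> < r j"
      unfolding abs_less_iff using m1 m2 by linarith+
  qed
  show False using int[OF a1 a3(1)] int[OF a2 a3(2)] dis by auto
qed


lemma core1:
  fixes ym rm ya ra yb rb ya2 ra2 :: real
  assumes "rm>0" "ra>0" "rb>0" "ra2>0"
    "ym+rm \<le> ya+ra" "ym+rm \<le> yb+rb" "ym+rm \<le> ya2+ra2"
    "\<bar>ym-ya\<bar> \<le> rm+ra" "\<bar>ym-yb\<bar> \<le> rm+rb" "\<bar>ya-ya2\<bar> \<le> ra+ra2"
    "\<bar>ym-ya2\<bar> \<ge> rm+ra2"
    "ya+ra \<le> yb-rb"
  shows "ya+ra = ym+rm \<and> ya2-ra2 = ym+rm \<and> yb-rb = ym+rm"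
  using assms by linarith

lemma core2:
  fixes ym rm ya ra yb rb ya2 ra2 ya3 ra3 yb2 rb2 :: real
  assumes "rm>0" "ra>0" "rb>0" "ra2>0" "ra3>0" "rb2>0"
    "ym+rm \<le> ya3+ra3" "ym+rm \<le> yb2+rb2"
    "\<bar>ya2-ya3\<bar> \<le> ra2+ra3" "\<bar>yb-yb2\<bar> \<le> rb+rb2"
    "\<bar>ya-ya3\<bar> \<ge> ra+ra3" "\<bar>ya3-yb\<bar> \<ge> ra3+rb" "\<bar>ym-yb2\<bar> \<ge> rm+rb2" "\<bar>ya2-yb2\<bar> \<ge> ra2+rb2"
    "ya+ra = ym+rm" "ya2-ra2 = ym+rm" "yb-rb = ym+rm"
  shows "ra2 = rb"
  using assms by linarith

lemma corner_intro:
  assumes "sx = 1 \<or> sx = -1" "ty = 1 \<or> ty = -1" "x i + sx * r i = L" "y i + ty * r i = u"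
  shows "is_corner r x y i (L,u)"
  using assms unfolding is_corner_def by force

lemma mod_ne: "0 < d \<Longrightarrow> d < (k::nat) \<Longrightarrow> (i + d) mod k \<noteq> i mod k"
  by (metis add_diff_cancel_left' le_add1 mod_eq_dvd_iff_nat nat_dvd_not_less)

lemma mod_cover: "j < (k::nat) \<Longrightarrow> (i + (j + k - i mod k) mod k) mod k = j"
  by (metis add_diff_inverse_nat less_numeral_extra(3) mod_add_left_eq
    mod_add_right_eq mod_add_self2 mod_if mod_less_divisor
    nat_diff_split_asm trans_less_add2 zero_less_diff)

lemma idx1: "0 < (k::nat) \<Longrightarrow> (Suc i mod k + k - 1) mod k = i mod k"
  by (metis add_Suc_shift diff_Suc_1 gr0_implies_Suc mod_add_left_eq
    mod_add_self2 nat_arith.suc1)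

lemma generic_pair:
  assumes wg: "weak_generic n r" and n: "n \<ge> 6" and p: "p \<in> {1..n}" and q: "q \<in> {1..n}"
    and pq: "p \<noteq> q" and eq: "r p = r q"
  shows False
proof -
  define \<sigma> :: "nat \<Rightarrow> int" where "\<sigma> i = (if i = p then 1 else if i = q then -1 else 0)" for i
  have s1: "\<forall>i\<in>{1..n}. \<sigma> i \<in> {-1, 0, 1}" unfolding \<sigma>_def by auto
  have "{i\<in>{1..n}. \<sigma> i = 0} = {1..n} - {p,q}" unfolding \<sigma>_def by auto
  hence "card {i\<in>{1..n}. \<sigma> i = 0} = n - 2" using p q pq by (simp add: card_Diff_subset)
  hence s2: "card {i\<in>{1..n}. \<sigma> i = 0} \<ge> 4" using n by simp
  have "(\<Sum>i=1..n. of_int (\<sigma> i) * r i) = (\<Sum>i=1..n. (if i = p then r i else 0) - (if i = q then r i else 0))"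
    by (rule sum.cong) (auto simp: \<sigma>_def pq)
  also have "\<dots> = r p - r q" using p q by (simp add: sum_subtractf)
  finally have s3: "(\<Sum>i=1..n. of_int (\<sigma> i) * r i) = 0" using eq by simp
  have "\<sigma> p = 0" using wg s1 s2 s3 p unfolding weak_generic_def by blast
  thus False unfolding \<sigma>_def by simp
qed

theorem lemma16:
  fixes n :: nat and r x y :: "nat \<Rightarrow> real" and c :: "nat list"
  assumes "n \<ge> 6"
    and "homothetic_packing n r x y"
    and "weak_generic n r"
    and "is_cycle n (x_edge n r x y) c"
    and "\<forall>i < length c.
           (let k = length c; a = c ! ((i + k - 1) mod k); b = c ! i; d = c ! ((i + 1) mod k) in
             \<not> (x a < x b \<and> x b < x d) \<and> \<not> (x d < x b \<and> x b < x a))"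
  shows "length c = 4 \<and> share_corner r x y (set c)"
proof -
  define k where "k = length c"
  have cyc: "k \<ge> 3" "distinct c" "set c \<subseteq> {1..n}"
    "\<forall>i<k. x_edge n r x y (c!i) (c!((i+1) mod k))"
    using assms(4) unfolding is_cycle_def k_def by auto
  have kpos: "k > 0" using cyc(1) by simp
  define v where "v i = c ! (i mod k)" for i
  have vin: "v i \<in> {1..n}" for i
  proof -
    have "c ! (i mod k) \<in> set c" using kpos unfolding k_def by simp
    thus ?thesis using cyc(3) unfolding v_def by blast
  qed
  have vmod: "v (i mod k) = v i" for i unfolding v_def by simp
  have vk: "v (i + k) = v i" for i unfolding v_def by simp
  have vne: "v i \<noteq> v (i + d)" if "0 < d" "d < k" for i d
  proof
    assume "v i = v (i + d)"
    hence "i mod k = (i + d) mod k"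
      using cyc(2) kpos unfolding v_def k_def by (simp add: nth_eq_iff_index_eq)
    thus False using mod_ne[OF that, of i] by simp
  qed
  have rpos: "r (v i) > 0" for i using assms(2) vin[of i] unfolding homothetic_packing_def by auto
  have edge: "x_edge n r x y (v i) (v (Suc i))" for i
    using cyc(4)[rule_format, of "i mod k"] kpos unfolding v_def by (simp add: mod_Suc_eq)
  have cond: "\<not> (x (v i) < x (v (Suc i)) \<and> x (v (Suc i)) < x (v (Suc (Suc i)))) \<and>
      \<not> (x (v (Suc (Suc i))) < x (v (Suc i)) \<and> x (v (Suc i)) < x (v i))" for i
  proof -
    have "Suc i mod k < length c" using kpos unfolding k_def by simp
    from assms(5)[rule_format, OF this]
    show ?thesis using idx1[OF kpos, of i] kpos unfolding v_def k_def[symmetric] Let_def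
      by (simp add: mod_Suc_eq)
  qed
  have absD: "\<bar>x (v (Suc i)) - x (v i)\<bar> = r (v i) + r (v (Suc i))" for i
    using edge[of i] unfolding x_edge_def by (simp add: abs_minus_commute)
  have inter: "\<bar>y (v i) - y (v (Suc i))\<bar> \<le> r (v i) + r (v (Suc i))" for i
    using edge[of i] unfolding x_edge_def by simp
  define s :: real where "s = (if x (v (Suc 0)) > x (v 0) then 1 else -1)"
  have Dform: "x (v (Suc i)) - x (v i) = s * (-1)^i * (r (v i) + r (v (Suc i)))" for i
  proof (induction i)
    case 0
    then show ?case using absD[of 0] unfolding s_def by (auto simp: abs_if split: if_splits)
  next
    case (Suc i)
    have p1: "r (v i) + r (v (Suc i)) > 0" "r (v (Suc i)) + r (v (Suc (Suc i))) > 0"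
      using rpos[of i] rpos[of "Suc i"] rpos[of "Suc (Suc i)"] by auto
    have sg: "s * (-1)^i = 1 \<or> s * (-1)^i = -1" unfolding s_def by (auto simp: minus_one_power_iff)
    have c1: "\<not> (x (v i) < x (v (Suc i)) \<and> x (v (Suc i)) < x (v (Suc (Suc i))))"
      "\<not> (x (v (Suc (Suc i))) < x (v (Suc i)) \<and> x (v (Suc i)) < x (v i))" using cond[of i] by auto
    show ?case
    proof (cases "s * (-1)^i = 1")
      case True
      hence "x (v (Suc i)) - x (v i) > 0" using Suc.IH p1 by simp
      hence "x (v (Suc (Suc i))) - x (v (Suc i)) < 0" using c1 p1 absD[of "Suc i"] by (auto simp: abs_if split: if_splits)
      moreover have "s * (-1)^(Suc i) = -1" using True by simp
      ultimately show ?thesis using absD[of "Suc i"] by (auto simp: abs_if split: if_splits)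
    next
      case False
      hence F: "s * (-1)^i = -1" using sg by simp
      hence "x (v (Suc i)) - x (v i) < 0" using Suc.IH p1 by simp
      hence "x (v (Suc (Suc i))) - x (v (Suc i)) > 0" using c1 p1 absD[of "Suc i"] by (auto simp: abs_if split: if_splits)
      moreover have "s * (-1)^(Suc i) = 1" using F by simp
      ultimately show ?thesis using absD[of "Suc i"] by (auto simp: abs_if split: if_splits)
    qed
  qed
  have sgn: "s * (-1)^i = 1 \<or> s * (-1)^i = -1" for i unfolding s_def by (auto simp: minus_one_power_iff)
  define L where "L = x (v 0) + s * r (v 0)"
  have Lform: "x (v i) + s * (-1)^i * r (v i) = L" for i
  proof (induction i)
    case 0 then show ?case unfolding L_def by simp
  next
    case (Suc i)
    have "x (v (Suc i)) + s * (-1)^(Suc i) * r (v (Suc i))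
       = x (v i) + (x (v (Suc i)) - x (v i)) - s * (-1)^i * r (v (Suc i))" by simp
    also have "\<dots> = x (v i) + s * (-1)^i * r (v i)" unfolding Dform by (simp add: algebra_simps)
    finally show ?case using Suc.IH by simp
  qed
  have keven: "even k"
  proof (rule ccontr)
    assume "odd k"
    have "x (v (Suc k)) - x (v k) = s * (-1)^k * (r (v k) + r (v (Suc k)))" by (rule Dform)
    moreover have "v (Suc k) = v (Suc 0)" "v k = v 0" using vk[of 1] vk[of 0] by simp_all
    moreover have "x (v (Suc 0)) - x (v 0) = s * (-1)^0 * (r (v 0) + r (v (Suc 0)))" by (rule Dform)
    ultimately have "s * (r (v 0) + r (v (Suc 0))) = - s * (r (v 0) + r (v (Suc 0)))"
      using \<open>odd k\<close> by simp
    moreover have "r (v 0) + r (v (Suc 0)) > 0" using rpos[of 0] rpos[of 1] by simp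
    moreover have "s \<noteq> 0" unfolding s_def by simp
    ultimately show False by simp
  qed
  have disj: "\<bar>y (v i) - y (v (i+d))\<bar> \<ge> r (v i) + r (v (i+d))" if "0<d" "d<k" "even d" for i d
  proof -
    have pw: "(-1::real)^(i+d) = (-1)^i" using that(3) by (simp add: power_add)
    show ?thesis
      apply (rule side_disj[OF assms(2) vin vin vne[OF that(1,2)], of "s * (-1)^i"])
      using sgn[of i] apply simp
      using Lform[of i] Lform[of "i+d"] pw by simp
  qed
  obtain m where mk: "m < k" and mmin: "\<forall>j<k. y (v m) + r (v m) \<le> y (v j) + r (v j)"
  proof -
    define f where "f i = y (v i) + r (v i)" for i
    have fin: "finite (f ` {..<k})" by simp
    have ne: "f ` {..<k} \<noteq> {}" using kpos by auto
    have "Min (f ` {..<k}) \<in> f ` {..<k}" using Min_in[OF fin ne] .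
    then obtain m where m: "m < k" "Min (f ` {..<k}) = f m" by auto
    have "\<forall>j<k. f m \<le> f j"
    proof (intro allI impI)
      fix j assume "j < k"
      hence "Min (f ` {..<k}) \<le> f j" using Min_le[OF fin] by simp
      thus "f m \<le> f j" using m by simp
    qed
    thus ?thesis using that m(1) unfolding f_def by blast
  qed
  have top: "y (v m) + r (v m) \<le> y (v j) + r (v j)" for j
    using mmin[rule_format, of "j mod k"] kpos vmod[of j] by simp
  define B where "B = m + k - 3"
  have B3: "v (B + 3) = v m" unfolding B_def using cyc(1) vk[of m] by (simp add: algebra_simps)
  define u where "u = y (v m) + r (v m)"
  have k46: "k = 4 \<or> k \<ge> 6" using keven cyc(1) by presburger
  have d2: "0 < (2::nat)" "2 < k" "even (2::nat)" using cyc(1) by auto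
  define w where "w j = v (B + j)" for j
  have w3: "w 3 = v m" unfolding w_def using B3 .
  have INw: "\<bar>y (w j) - y (w l)\<bar> \<le> r (w j) + r (w l)" if "l = Suc j \<or> j = Suc l" for j l
    using that inter[of "B+j"] inter[of "B+l"] unfolding w_def
    by (auto simp: abs_minus_commute)
  have D2w: "\<bar>y (w j) - y (w l)\<bar> \<ge> r (w j) + r (w l)" if "l = j + 2 \<or> j = l + 2" for j l
    using that disj[OF d2, of "B+j"] disj[OF d2, of "B+l"] unfolding w_def
    by (auto simp: abs_minus_commute add.assoc)
  have TOPw: "y (w 3) + r (w 3) \<le> y (w j) + r (w j)" for j unfolding w3 unfolding w_def using top by simp
  have R: "r (w j) > 0" for j unfolding w_def using rpos by simp
  have I32: "\<bar>y (w 3) - y (w 2)\<bar> \<le> r (w 3) + r (w 2)" by (rule INw) simp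
  have I34: "\<bar>y (w 3) - y (w 4)\<bar> \<le> r (w 3) + r (w 4)" by (rule INw) simp
  have I21: "\<bar>y (w 2) - y (w 1)\<bar> \<le> r (w 2) + r (w 1)" by (rule INw) simp
  have I45: "\<bar>y (w 4) - y (w 5)\<bar> \<le> r (w 4) + r (w 5)" by (rule INw) simp
  have I10: "\<bar>y (w 1) - y (w 0)\<bar> \<le> r (w 1) + r (w 0)" by (rule INw) simp
  have I56: "\<bar>y (w 5) - y (w 6)\<bar> \<le> r (w 5) + r (w 6)" by (rule INw) simp
  have D31: "\<bar>y (w 3) - y (w 1)\<bar> \<ge> r (w 3) + r (w 1)" by (rule D2w) simp
  have D35: "\<bar>y (w 3) - y (w 5)\<bar> \<ge> r (w 3) + r (w 5)" by (rule D2w) simp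
  have D20: "\<bar>y (w 2) - y (w 0)\<bar> \<ge> r (w 2) + r (w 0)" by (rule D2w) simp
  have D46: "\<bar>y (w 4) - y (w 6)\<bar> \<ge> r (w 4) + r (w 6)" by (rule D2w) simp
  have D24: "\<bar>y (w 2) - y (w 4)\<bar> \<ge> r (w 2) + r (w 4)" by (rule D2w) simp
  have orient: "y (w 2) + r (w 2) \<le> y (w 4) - r (w 4) \<or> y (w 4) + r (w 4) \<le> y (w 2) - r (w 2)"
    using D24 by (auto simp: abs_if split: if_splits)
  have cor: "is_corner r x y (w j) (L, u)" if "y (w j) + r (w j) = u \<or> y (w j) - r (w j) = u" for j
  proof -
    have "x (w j) + (s * (-1)^(B+j)) * r (w j) = L" using Lform[of "B+j"] unfolding w_def .
    moreover have "y (w j) + 1 * r (w j) = u \<or> y (w j) + (-1) * r (w j) = u" using that by simp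
    ultimately show ?thesis using sgn[of "B+j"] corner_intro by metis
  qed
  have uw: "u = y (w 3) + r (w 3)" unfolding u_def w3 ..
  show ?thesis
  proof (cases "k = 4")
    case k4: True
    have cov: "set c = w ` {1, 2, 3, 4}"
    proof
      show "w ` {1, 2, 3, 4} \<subseteq> set c" using kpos unfolding w_def v_def k_def by auto
      show "set c \<subseteq> w ` {1, 2, 3, 4}"
      proof
        fix z assume "z \<in> set c"
        then obtain j where j: "j < k" "z = c ! j" unfolding k_def by (auto simp: in_set_conv_nth)
        define e where "e = (j + k - (B+1) mod k) mod k"
        have "e < 4" using k4 unfolding e_def by simp
        hence "1 + e \<in> {1, 2, 3, 4}" unfolding insert_iff empty_iff by presburger
        moreover have "z = w (1 + e)" using mod_cover[OF j(1), of "B+1"] j unfolding w_def v_def e_def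
          by (simp add: add.assoc)
        ultimately show "z \<in> w ` {1, 2, 3, 4}" by blast
      qed
    qed
    have w5: "w 5 = w 1" using vk[of "B+1"] k4 unfolding w_def by (simp add: algebra_simps)
    have corners: "is_corner r x y (w j) (L, u)" if "j \<in> {1,2,3,4}" for j
    proof (rule disjE[OF orient])
      assume o: "y (w 2) + r (w 2) \<le> y (w 4) - r (w 4)"
      have h: "y (w 2) + r (w 2) = y (w 3) + r (w 3) \<and> y (w 1) - r (w 1) = y (w 3) + r (w 3) \<and> y (w 4) - r (w 4) = y (w 3) + r (w 3)"
        by (rule core1[OF R[of 3] R[of 2] R[of 4] R[of 1] TOPw[of 2] TOPw[of 4] TOPw[of 1] I32 I34 I21 D31 o])
      have "is_corner r x y (w 1) (L, u)" "is_corner r x y (w 2) (L, u)"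
           "is_corner r x y (w 3) (L, u)" "is_corner r x y (w 4) (L, u)"
        by (rule cor; use h uw in linarith)+
      then show ?thesis using that by auto
    next
      assume o: "y (w 4) + r (w 4) \<le> y (w 2) - r (w 2)"
      have h: "y (w 4) + r (w 4) = y (w 3) + r (w 3) \<and> y (w 5) - r (w 5) = y (w 3) + r (w 3) \<and> y (w 2) - r (w 2) = y (w 3) + r (w 3)"
        by (rule core1[OF R[of 3] R[of 4] R[of 2] R[of 5] TOPw[of 4] TOPw[of 2] TOPw[of 5] I34 I32 I45 D35 o])
      have "is_corner r x y (w 5) (L, u)" "is_corner r x y (w 2) (L, u)"
           "is_corner r x y (w 3) (L, u)" "is_corner r x y (w 4) (L, u)"
        by (rule cor; use h uw in linarith)+
      then show ?thesis using that w5 by auto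
    qed
    have "\<forall>z\<in>set c. is_corner r x y z (L, u)" using cov corners by auto
    then show ?thesis using k4 unfolding share_corner_def k_def by blast
  next
    case False
    hence k6: "k \<ge> 6" using k46 by simp
    have d4: "0 < (4::nat)" "4 < k" "even (4::nat)" using k6 by auto
    have D4w: "\<bar>y (w j) - y (w l)\<bar> \<ge> r (w j) + r (w l)" if "l = j + 4 \<or> j = l + 4" for j l
      using that disj[OF d4, of "B+j"] disj[OF d4, of "B+l"] unfolding w_def
      by (auto simp: abs_minus_commute add.assoc)
    have D04: "\<bar>y (w 0) - y (w 4)\<bar> \<ge> r (w 0) + r (w 4)" by (rule D4w) simp
    have D15: "\<bar>y (w 1) - y (w 5)\<bar> \<ge> r (w 1) + r (w 5)" by (rule D4w) simp
    have D62: "\<bar>y (w 6) - y (w 2)\<bar> \<ge> r (w 6) + r (w 2)" by (rule D4w) simp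
    have D51: "\<bar>y (w 5) - y (w 1)\<bar> \<ge> r (w 5) + r (w 1)" by (rule D4w) simp
    have D13: "\<bar>y (w 1) - y (w 3)\<bar> \<ge> r (w 1) + r (w 3)" by (rule D2w) simp
    have I12: "\<bar>y (w 1) - y (w 2)\<bar> \<le> r (w 1) + r (w 2)" by (rule INw) simp
    have ne1: "w 1 \<noteq> w 4" using vne[of 3 "B+1"] k6 unfolding w_def by (simp add: algebra_simps)
    have ne2: "w 5 \<noteq> w 2" using vne[of 3 "B+2"] k6 unfolding w_def by (simp add: algebra_simps)
    have win: "w j \<in> {1..n}" for j unfolding w_def by (rule vin)
    show ?thesis
    proof (rule disjE[OF orient])
      assume o: "y (w 2) + r (w 2) \<le> y (w 4) - r (w 4)"
      have h: "y (w 2) + r (w 2) = y (w 3) + r (w 3) \<and> y (w 1) - r (w 1) = y (w 3) + r (w 3) \<and> y (w 4) - r (w 4) = y (w 3) + r (w 3)"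
        by (rule core1[OF R[of 3] R[of 2] R[of 4] R[of 1] TOPw[of 2] TOPw[of 4] TOPw[of 1] I32 I34 I21 D31 o])
      have "r (w 1) = r (w 4)"
        using core2[OF R[of 3] R[of 2] R[of 4] R[of 1] R[of 0] R[of 5] TOPw[of 0] TOPw[of 5]
          I10 I45 D20 D04 D35 D15] h by blast
      then show ?thesis using generic_pair[OF assms(3,1) win win ne1] by simp
    next
      assume o: "y (w 4) + r (w 4) \<le> y (w 2) - r (w 2)"
      have h: "y (w 4) + r (w 4) = y (w 3) + r (w 3) \<and> y (w 5) - r (w 5) = y (w 3) + r (w 3) \<and> y (w 2) - r (w 2) = y (w 3) + r (w 3)"
        by (rule core1[OF R[of 3] R[of 4] R[of 2] R[of 5] TOPw[of 4] TOPw[of 2] TOPw[of 5] I34 I32 I45 D35 o])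
      have "r (w 5) = r (w 2)"
        using core2[OF R[of 3] R[of 4] R[of 2] R[of 5] R[of 6] R[of 1] TOPw[of 6] TOPw[of 1]
          I56 I21 D46 D62 D31 D51] h by blast
      then show ?thesis using generic_pair[OF assms(3,1) win win ne2] by simp
    qed
  qed
qed
end
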